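(* $h_\omega(w)=\frac w4+O(w^{3/4})$; that is, there exist constants $C>0$ and $w_0\ge1$ such that $h_\omega(w)\le\frac w4+Cw^{3/4}$ for all real $w\ge w_0$.
   Context: A weighted digraph $D=(V,A,w_D)$ is a digraph without loops or parallel arcs (opposite arcs allowed) with weights $w_D:A\to\mathbb{R}_{\ge0}$; $w(D)$ is its total arc weight. For a partition $(X,Y)$ of $V$, the dicut $(X,Y)$ consists of the arcs from $X$ to $Y$, and its weight is their total weight. $\mathcal{D}_\omega(w)$ is the set of weighted digraphs $D$ in which every arc has weight at least $1$ and $w(D)=w$. For real $w\ge1$, $h_\omega(w)$ is the supremum of reals $g$ such that every acyclic $D\in\mathcal{D}_\omega(w)$ has a dicut of weight at least $g$. *)

theory Defs
  imports Complex_Main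
begin

text \<open>A weighted digraph on a finite vertex set V (vertices drawn from nat; every finite
digraph is isomorphic to one of these), arc set A \<subseteq> V \<times> V without loops
(opposite arcs allowed, no parallel arcs since A is a set), nonnegative weights.\<close>

definition weighted_digraph :: "nat set \<Rightarrow> (nat \<times> nat) set \<Rightarrow> (nat \<times> nat \<Rightarrow> real) \<Rightarrow> bool" where
  "weighted_digraph V A wt \<longleftrightarrow> finite V \<and> A \<subseteq> V \<times> V \<and> (\<forall>(u,v)\<in>A. u \<noteq> v) \<and> (\<forall>a\<in>A. wt a \<ge> 0)"

definition total_weight :: "(nat \<times> nat) set \<Rightarrow> (nat \<times> nat \<Rightarrow> real) \<Rightarrow> real" where
  "total_weight A wt = (\<Sum>a\<in>A. wt a)"

definition in_D_omega :: "real \<Rightarrow> nat set \<Rightarrow> (nat \<times> nat) set \<Rightarrow> (nat \<times> nat \<Rightarrow> real) \<Rightarrow> bool" where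
  "in_D_omega w V A wt \<longleftrightarrow> weighted_digraph V A wt \<and> (\<forall>a\<in>A. wt a \<ge> 1) \<and> total_weight A wt = w"

definition dicut_weight :: "(nat \<times> nat) set \<Rightarrow> (nat \<times> nat \<Rightarrow> real) \<Rightarrow> nat set \<Rightarrow> nat set \<Rightarrow> real" where
  "dicut_weight A wt X Y = (\<Sum>a\<in>{(u,v)\<in>A. u \<in> X \<and> v \<in> Y}. wt a)"

definition h_omega :: "real \<Rightarrow> real" where
  "h_omega w = Sup {g. \<forall>V A wt. in_D_omega w V A wt \<and> acyclic A \<longrightarrow>
      (\<exists>X Y. X \<union> Y = V \<and> X \<inter> Y = {} \<and> dicut_weight A wt X Y \<ge> g)}"

end

theory Submission imports Defs begin

definition PP :: "nat \<Rightarrow> (nat \<times> nat) set" where "PP K = {(u,v). u<v \<and> v<K}"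
definition sh :: "nat \<Rightarrow> nat \<times> nat \<Rightarrow> nat \<times> nat" where "sh t p = (t + fst p, t + snd p)"
definition arcs :: "nat \<Rightarrow> nat \<Rightarrow> (nat \<times> nat) set" where "arcs N K = (\<Union>t<N. sh t ` PP K)"
definition mult :: "nat \<Rightarrow> nat \<Rightarrow> nat \<times> nat \<Rightarrow> real" where
  "mult N K a = real (card {t\<in>{..<N}. a \<in> sh t ` PP K})"

lemma finite_PP: "finite (PP K)"
proof -
  have "PP K \<subseteq> {..<K} \<times> {..<K}" by (auto simp: PP_def)
  then show ?thesis by (rule finite_subset) auto
qed

lemma finite_arcs: "finite (arcs N K)"
  unfolding arcs_def using finite_PP by auto

lemma inj_sh: "inj_on (sh t) S"
  by (auto simp: inj_on_def sh_def prod_eq_iff)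

lemma sum_arcs: "(\<Sum>a\<in>arcs N K. mult N K a * f a) = (\<Sum>t<N. \<Sum>p\<in>PP K. f (sh t p))"
proof -
  have m: "mult N K a = (\<Sum>t<N. if a \<in> sh t ` PP K then 1 else 0)" for a
    unfolding mult_def by (simp add: sum.If_cases Int_def)
  have "(\<Sum>a\<in>arcs N K. mult N K a * f a) = (\<Sum>a\<in>arcs N K. \<Sum>t<N. if a \<in> sh t ` PP K then f a else 0)"
    unfolding m sum_distrib_right by (intro sum.cong) auto
  also have "\<dots> = (\<Sum>t<N. \<Sum>a\<in>arcs N K. if a \<in> sh t ` PP K then f a else 0)"
    by (rule sum.swap)
  also have "\<dots> = (\<Sum>t<N. \<Sum>a\<in>sh t ` PP K. f a)"
  proof (rule sum.cong[OF refl])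
    fix t assume "t \<in> {..<N}"
    then have sub: "sh t ` PP K \<subseteq> arcs N K" by (auto simp: arcs_def)
    have "(\<Sum>a\<in>arcs N K. if a \<in> sh t ` PP K then f a else 0) = (\<Sum>a\<in>arcs N K \<inter> sh t ` PP K. f a)"
      by (simp add: sum.If_cases finite_arcs)
    also have "arcs N K \<inter> sh t ` PP K = sh t ` PP K" using sub by blast
    finally show "(\<Sum>a\<in>arcs N K. if a \<in> sh t ` PP K then f a else 0) = (\<Sum>a\<in>sh t ` PP K. f a)" .
  qed
  also have "\<dots> = (\<Sum>t<N. \<Sum>p\<in>PP K. f (sh t p))"
    by (simp add: sum.reindex inj_sh)
  finally show ?thesis .
qed

lemma sumPP: "(\<Sum>p\<in>PP K. g p) = (\<Sum>u<K. \<Sum>v<K. if u<v then g (u,v) else (0::real))"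
proof -
  have e: "PP K = {p\<in>{..<K}\<times>{..<K}. fst p < snd p}" by (auto simp: PP_def)
  have "(\<Sum>p\<in>PP K. g p) = (\<Sum>p\<in>{..<K}\<times>{..<K}. if fst p < snd p then g p else 0)"
    unfolding e by (rule sum.inter_filter) auto
  also have "\<dots> = (\<Sum>u<K. \<Sum>v<K. if u<v then g (u,v) else (0::real))"
    by (auto simp: sum.cartesian_product split_def intro!: sum.cong)
  finally show ?thesis .
qed

lemma sum_real_nat: "(\<Sum>u<K. real u) = real K * (real K - 1) / 2"
  by (induction K) (auto simp: field_simps)

lemma cnt1: "u < K \<Longrightarrow> (\<Sum>v<K. if u<v then (1::real) else 0) = real K - 1 - real u"
proof -
  assume "u<K"
  have "(\<Sum>v<K. if u<v then (1::real) else 0) = real (card {v\<in>{..<K}. u<v})"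
    by (simp add: sum.If_cases Int_def)
  also have "{v\<in>{..<K}. u<v} = {Suc u..<K}" by auto
  finally show ?thesis using \<open>u<K\<close> by simp
qed

lemma cnt2: "(\<Sum>u<K. if u<v then (1::real) else 0) = (if v < K then real v else real K)"
proof -
  have "(\<Sum>u<K. if u<v then (1::real) else 0) = real (card {u\<in>{..<K}. u<v})"
    by (simp add: sum.If_cases Int_def)
  also have "{u\<in>{..<K}. u<v} = {..<min v K}" by auto
  finally show ?thesis by simp
qed

lemma card_PP: "real (card (PP K)) = real K * (real K - 1) / 2"
proof -
  have "real (card (PP K)) = (\<Sum>p\<in>PP K. 1)" by simp
  also have "\<dots> = (\<Sum>u<K. \<Sum>v<K. if u<v then 1 else (0::real))" by (rule sumPP)
  also have "\<dots> = (\<Sum>v<K. \<Sum>u<K. if u<v then 1 else (0::real))" by (rule sum.swap)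
  also have "\<dots> = (\<Sum>v<K. real v)" by (rule sum.cong) (auto simp: cnt2)
  finally show ?thesis by (simp add: sum_real_nat)
qed

lemma window:
  fixes y :: "nat \<Rightarrow> real"
  assumes y01: "\<And>u. y u = 0 \<or> y u = 1"
  shows "2*(\<Sum>u<K. \<Sum>v<K. if u<v then y u*(1-y v) else 0) \<le> real K^2/4 + (\<Sum>u<K. y u * (real K - 1 - 2*real u))"
proof -
  define S where "S = (\<Sum>u<K. y u)"
  define A1 where "A1 = (\<Sum>u<K. \<Sum>v<K. if u<v then y u*(1-y v) else 0)"
  define A2 where "A2 = (\<Sum>u<K. \<Sum>v<K. if v<u then y u*(1-y v) else 0)"
  have diag: "y u * (1 - y u) = 0" for u using y01[of u] by auto
  have full: "(\<Sum>u<K. \<Sum>v<K. y u*(1-y v)) = S*(real K - S)"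
  proof -
    have "(\<Sum>v<K. y u*(1-y v)) = y u * (real K - S)" for u
      by (simp add: S_def sum_distrib_left[symmetric] sum_subtractf)
    then have "(\<Sum>u<K. \<Sum>v<K. y u*(1-y v)) = (\<Sum>u<K. y u * (real K - S))" by simp
    also have "\<dots> = S*(real K - S)" by (simp add: S_def sum_distrib_right)
    finally show ?thesis .
  qed
  have pt: "y u*(1-y v) = (if u<v then y u*(1-y v) else 0) + (if v<u then y u*(1-y v) else 0)" for u v
    using diag[of u] by (cases u v rule: linorder_cases) auto
  have "(\<Sum>u<K. \<Sum>v<K. y u*(1-y v)) = A1 + A2"
    unfolding A1_def A2_def by (subst pt) (simp add: sum.distrib)
  have A2': "A2 = (\<Sum>u<K. \<Sum>v<K. if u<v then y v*(1-y u) else 0)"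
    unfolding A2_def by (rule sum.swap)
  have "A1 + A2 = (\<Sum>u<K. \<Sum>v<K. if u<v then 2*(y u*(1-y v)) - (y u - y v) else 0)"
    unfolding A1_def A2' sum.distrib[symmetric] by (intro sum.cong refl) (auto simp: algebra_simps)
  also have "\<dots> = (\<Sum>u<K. \<Sum>v<K. 2*(if u<v then y u*(1-y v) else 0) - (if u<v then y u else 0) + (if u<v then y v else 0))"
    by (intro sum.cong refl) auto
  also have "\<dots> = 2*A1 - (\<Sum>u<K. \<Sum>v<K. if u<v then y u else 0) + (\<Sum>u<K. \<Sum>v<K. if u<v then y v else 0)"
    unfolding A1_def by (simp only: sum.distrib sum_subtractf sum_distrib_left)
  finally have eq: "S*(real K - S) = 2*A1 - (\<Sum>u<K. \<Sum>v<K. if u<v then y u else 0) + (\<Sum>u<K. \<Sum>v<K. if u<v then y v else 0)"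
    using full \<open>_ = A1 + A2\<close> by simp
  have l1: "(\<Sum>u<K. \<Sum>v<K. if u<v then y u else 0) = (\<Sum>u<K. y u * (real K - 1 - real u))"
  proof (rule sum.cong[OF refl])
    fix u assume "u \<in> {..<K}"
    then have "(\<Sum>v<K. if u<v then y u else 0) = y u * (\<Sum>v<K. if u<v then 1 else 0)"
      by (simp add: sum_distrib_left if_distrib cong: if_cong)
    then show "(\<Sum>v<K. if u<v then y u else 0) = y u * (real K - 1 - real u)"
      using cnt1 \<open>u \<in> {..<K}\<close> by simp
  qed
  have l2: "(\<Sum>u<K. \<Sum>v<K. if u<v then y v else 0) = (\<Sum>v<K. y v * real v)"
  proof -
    have "(\<Sum>u<K. \<Sum>v<K. if u<v then y v else 0) = (\<Sum>v<K. \<Sum>u<K. if u<v then y v else 0)"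
      by (rule sum.swap)
    also have "\<dots> = (\<Sum>v<K. y v * real v)"
    proof (rule sum.cong[OF refl])
      fix v assume "v \<in> {..<K}"
      then have "(\<Sum>u<K. if u<v then y v else 0) = y v * (\<Sum>u<K. if u<v then 1 else 0)"
        by (simp add: sum_distrib_left if_distrib cong: if_cong)
      then show "(\<Sum>u<K. if u<v then y v else 0) = y v * real v"
        using cnt2 \<open>v \<in> {..<K}\<close> by simp
    qed
    finally show ?thesis .
  qed
  have lin: "(\<Sum>u<K. y u * (real K - 1 - real u)) - (\<Sum>v<K. y v * real v) = (\<Sum>u<K. y u * (real K - 1 - 2*real u))"
    by (simp add: sum_subtractf[symmetric] algebra_simps)
  have sq: "S*(real K - S) \<le> real K^2/4"
    using zero_le_power2[of "real K - 2*S"] by (simp add: power2_eq_square algebra_simps)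
  show ?thesis
    using eq l1 l2 lin sq unfolding A1_def by linarith
qed

lemma sum_real_nat2: "(\<Sum>u<K. (real K - 1 - 2*real u)) = 0"
proof -
  have "(\<Sum>u<K. (real K - 1 - 2*real u)) = real K * (real K - 1) - 2*(\<Sum>u<K. real u)"
    by (simp only: sum_subtractf sum_distrib_left[symmetric]) (simp add: algebra_simps)
  then show ?thesis by (simp add: sum_real_nat)
qed

lemma linear_bound:
  fixes x :: "nat \<Rightarrow> real"
  assumes x01: "\<And>i. 0 \<le> x i \<and> x i \<le> 1"
  shows "(\<Sum>t<N. \<Sum>u<K. x (t+u) * (real K - 1 - 2*real u)) \<le> real K^3"
proof -
  define S where "S u = (\<Sum>t<N. x (t+u))" for u
  have shift: "\<bar>S u - S 0\<bar> \<le> real u" for u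
  proof (induction u)
    case 0 then show ?case by simp
  next
    case (Suc u)
    have "S (Suc u) - S u = (\<Sum>t<N. x (Suc t + u) - x (t + u))"
      by (simp add: S_def sum_subtractf)
    also have "\<dots> = x (N+u) - x (0+u)"
      by (rule sum_lessThan_telescope[where f = "\<lambda>t. x (t+u)"])
    finally have "\<bar>S (Suc u) - S u\<bar> \<le> 1" using x01[of "N+u"] x01[of u] by (simp add: abs_le_iff)
    then show ?case using Suc by simp
  qed
  have "(\<Sum>t<N. \<Sum>u<K. x (t+u) * (real K - 1 - 2*real u)) = (\<Sum>u<K. \<Sum>t<N. x (t+u) * (real K - 1 - 2*real u))"
    by (rule sum.swap)
  also have "\<dots> = (\<Sum>u<K. (real K - 1 - 2*real u) * S u)"
    by (simp add: S_def sum_distrib_left sum_distrib_right mult.commute)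
  also have "\<dots> = (\<Sum>u<K. (real K - 1 - 2*real u) * (S u - S 0))"
  proof -
    have "(\<Sum>u<K. (real K - 1 - 2*real u) * (S u - S 0)) = (\<Sum>u<K. (real K - 1 - 2*real u) * S u) - (\<Sum>u<K. (real K - 1 - 2*real u)) * S 0"
      by (simp only: right_diff_distrib sum_subtractf[of "\<lambda>u. (real K - 1 - 2*real u) * S u"] sum_distrib_right)
    then show ?thesis using sum_real_nat2[of K] by simp
  qed
  also have "\<dots> \<le> (\<Sum>u<K. real K * real K)"
  proof (rule sum_mono)
    fix u assume "u \<in> {..<K}"
    then have u: "u < K" by simp
    have a: "\<bar>real K - 1 - 2*real u\<bar> \<le> real K" using u by auto
    have b: "\<bar>S u - S 0\<bar> \<le> real K" using shift[of u] u by simp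
    have "(real K - 1 - 2*real u) * (S u - S 0) \<le> \<bar>real K - 1 - 2*real u\<bar> * \<bar>S u - S 0\<bar>"
      by (metis abs_ge_self abs_mult)
    also have "\<dots> \<le> real K * real K" by (rule mult_mono[OF a b]) auto
    finally show "(real K - 1 - 2*real u) * (S u - S 0) \<le> real K * real K" .
  qed
  also have "\<dots> = real K^3" by (simp add: power3_eq_cube)
  finally show ?thesis .
qed

lemma arcs_lt: "a \<in> arcs N K \<Longrightarrow> fst a < snd a \<and> snd a < N + K"
  by (auto simp: arcs_def sh_def PP_def)

lemma mult_ge1: "a \<in> arcs N K \<Longrightarrow> mult N K a \<ge> 1"
proof -
  assume "a \<in> arcs N K"
  then obtain t where t: "t < N" "a \<in> sh t ` PP K" by (auto simp: arcs_def)
  then have "{t\<in>{..<N}. a \<in> sh t ` PP K} \<noteq> {}" by auto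
  then have "card {t\<in>{..<N}. a \<in> sh t ` PP K} \<noteq> 0" by simp
  then show ?thesis unfolding mult_def by linarith
qed

lemma mult_ge0: "mult N K a \<ge> 0" by (simp add: mult_def)

lemma acyclic_arcs: "acyclic (arcs N K)"
proof -
  have "arcs N K \<subseteq> less_than" using arcs_lt by fastforce
  then have "wf (arcs N K)" using wf_less_than wf_subset by blast
  then show ?thesis by (rule wf_acyclic)
qed

lemma total_arcs: "total_weight (arcs N K) (\<lambda>a. l * mult N K a) = l * real N * (real K * (real K - 1) / 2)"
proof -
  have "total_weight (arcs N K) (\<lambda>a. l * mult N K a) = l * (\<Sum>a\<in>arcs N K. mult N K a * 1)"
    by (simp add: total_weight_def sum_distrib_left)
  also have "\<dots> = l * (\<Sum>t<N. \<Sum>p\<in>PP K. 1)" by (simp only: sum_arcs)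
  also have "\<dots> = l * real N * real (card (PP K))" by simp
  finally show ?thesis by (simp add: card_PP)
qed

lemma dicut_arcs:
  assumes l: "l \<ge> 0" and XY: "X \<union> Y = {..<N+K}" "X \<inter> Y = {}"
  shows "dicut_weight (arcs N K) (\<lambda>a. l * mult N K a) X Y \<le> l * (real N * real K^2/8 + real K^3/2)"
proof -
  define x where "x i = (if i \<in> X then 1 else (0::real))" for i
  define f where "f a = x (fst a) * (1 - x (snd a))" for a
  have "dicut_weight (arcs N K) (\<lambda>a. l * mult N K a) X Y
      = (\<Sum>a\<in>arcs N K. if fst a \<in> X \<and> snd a \<in> Y then l * mult N K a else 0)"
    unfolding dicut_weight_def using finite_arcs
    by (subst sum.inter_filter[symmetric]) (auto simp: case_prod_beta intro!: sum.cong)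
  also have "\<dots> = (\<Sum>a\<in>arcs N K. l * (mult N K a * f a))"
  proof (rule sum.cong[OF refl])
    fix a assume "a \<in> arcs N K"
    then have "snd a \<in> X \<union> Y" using arcs_lt XY by auto
    then show "(if fst a \<in> X \<and> snd a \<in> Y then l * mult N K a else 0) = l * (mult N K a * f a)"
      using XY by (auto simp: f_def x_def)
  qed
  also have "\<dots> = l * (\<Sum>t<N. \<Sum>p\<in>PP K. f (sh t p))"
    by (simp add: sum_distrib_left[symmetric] sum_arcs)
  also have "\<dots> = l * (\<Sum>t<N. \<Sum>u<K. \<Sum>v<K. if u<v then x (t+u) * (1 - x (t+v)) else 0)"
    by (simp only: sumPP f_def sh_def fst_conv snd_conv)
  also have "\<dots> \<le> l * (real N * real K^2/8 + real K^3/2)"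
  proof (rule mult_left_mono[OF _ l])
    have w: "2*(\<Sum>u<K. \<Sum>v<K. if u<v then x (t+u) * (1 - x (t+v)) else 0) \<le> real K^2/4 + (\<Sum>u<K. x (t+u) * (real K - 1 - 2*real u))" for t
      using window[of "\<lambda>u. x (t+u)" K] by (simp add: x_def)
    have "2*(\<Sum>t<N. \<Sum>u<K. \<Sum>v<K. if u<v then x (t+u) * (1 - x (t+v)) else 0)
        \<le> (\<Sum>t<N. real K^2/4 + (\<Sum>u<K. x (t+u) * (real K - 1 - 2*real u)))"
      by (subst sum_distrib_left) (rule sum_mono, rule w)
    also have "\<dots> = real N * real K^2/4 + (\<Sum>t<N. \<Sum>u<K. x (t+u) * (real K - 1 - 2*real u))"
      by (simp add: sum.distrib)
    also have "\<dots> \<le> real N * real K^2/4 + real K^3"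
    proof -
      have "\<And>i. 0 \<le> x i \<and> x i \<le> 1" by (simp add: x_def)
      from linear_bound[where x=x and N=N and K=K, OF this] show ?thesis by simp
    qed
    finally show "(\<Sum>t<N. \<Sum>u<K. \<Sum>v<K. if u<v then x (t+u) * (1 - x (t+v)) else 0) \<le> real N * real K^2/8 + real K^3/2"
      by simp
  qed
  finally show ?thesis .
qed

lemma construct:
  assumes l: "l \<ge> 1" and w: "w = l * real N * (real K * (real K - 1) / 2)"
  shows "h_omega w \<le> l * (real N * real K^2/8 + real K^3/2)"
proof -
  define V where "V = {..<N+K}"
  define A where "A = arcs N K"
  define wt where "wt a = l * mult N K a" for a
  have D: "in_D_omega w V A wt"
    unfolding in_D_omega_def weighted_digraph_def V_def A_def wt_def
  proof (intro conjI)
    show "arcs N K \<subseteq> {..<N + K} \<times> {..<N + K}" using arcs_lt by fastforce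
    show "\<forall>(u, v)\<in>arcs N K. u \<noteq> v" using arcs_lt by fastforce
    show "\<forall>a\<in>arcs N K. 0 \<le> l * mult N K a" using l mult_ge0 by simp
    show "\<forall>a\<in>arcs N K. 1 \<le> l * mult N K a"
    proof
      fix a assume "a \<in> arcs N K"
      then have "mult N K a \<ge> 1" by (rule mult_ge1)
      then show "1 \<le> l * mult N K a" using l by (metis mult_mono' mult_1 zero_le_one)
    qed
    show "total_weight (arcs N K) (\<lambda>a. l * mult N K a) = w" using total_arcs[of N K l] w by (simp only:)
  qed simp
  have ac: "acyclic A" unfolding A_def by (rule acyclic_arcs)
  define S where "S = {g. \<forall>V A wt. in_D_omega w V A wt \<and> acyclic A \<longrightarrow>
      (\<exists>X Y. X \<union> Y = V \<and> X \<inter> Y = {} \<and> dicut_weight A wt X Y \<ge> g)}"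
  have "0 \<in> S"
    unfolding S_def
  proof (intro CollectI allI impI)
    fix V' A' wt' assume "in_D_omega w V' A' wt' \<and> acyclic A'"
    have "dicut_weight A' wt' V' {} = 0" by (simp add: dicut_weight_def)
    then show "\<exists>X Y. X \<union> Y = V' \<and> X \<inter> Y = {} \<and> 0 \<le> dicut_weight A' wt' X Y"
      by (intro exI[of _ V'] exI[of _ "{}"]) simp
  qed
  moreover have "g \<le> l * (real N * real K^2/8 + real K^3/2)" if "g \<in> S" for g
  proof -
    have "\<forall>V A wt. in_D_omega w V A wt \<and> acyclic A \<longrightarrow>
      (\<exists>X Y. X \<union> Y = V \<and> X \<inter> Y = {} \<and> dicut_weight A wt X Y \<ge> g)"
      using that unfolding S_def by (rule CollectD)
    then have "\<exists>X Y. X \<union> Y = V \<and> X \<inter> Y = {} \<and> dicut_weight A wt X Y \<ge> g"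
      using D ac by blast
    then obtain X Y where XY: "X \<union> Y = V" "X \<inter> Y = {}" "dicut_weight A wt X Y \<ge> g"
      by blast
    have "dicut_weight A wt X Y \<le> l * (real N * real K^2/8 + real K^3/2)"
      using dicut_arcs[of l X Y N K] l XY unfolding A_def wt_def V_def by simp
    then show ?thesis using XY by linarith
  qed
  ultimately have "Sup S \<le> l * (real N * real K^2/8 + real K^3/2)"
    by (intro cSup_least) auto
  then show ?thesis unfolding h_omega_def S_def .
qed

lemma aux_half: "(a::real) \<ge> 0 \<Longrightarrow> b \<ge> 0 \<Longrightarrow> (a - b)/2 \<le> a" by simp

theorem mainTheorem11:
  shows "\<exists>C>0. \<exists>w0\<ge>1. \<forall>w::real. w \<ge> w0 \<longrightarrow> h_omega w \<le> w / 4 + C * w powr (3/4)"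
proof -
  have main: "h_omega w \<le> w / 4 + 4 * w powr (3 / 4)" if w16: "16 \<le> w" for w :: real
  proof -
  define q where "q = w powr (1/4)"
  have wpos: "w > 0" using w16 by simp
  have qpos: "q > 0" using wpos by (simp add: q_def)
  have q4: "q^4 = w" unfolding q_def using wpos
    by (simp add: powr_realpow[symmetric] powr_powr)
  have q3: "w powr (3/4) = q^3" unfolding q_def using wpos
    by (simp add: powr_realpow[symmetric] powr_powr)
  have q2: "q \<ge> 2"
  proof (rule ccontr)
    assume "\<not> q \<ge> 2"
    then have "q^4 < 2^4" using qpos by (intro power_strict_mono) auto
    then show False using q4 w16 by simp
  qed
  define K where "K = nat \<lfloor>q\<rfloor>"
  have K1: "real K \<le> q" "real K > q - 1" using qpos unfolding K_def by linarith+
  have fl2: "2 \<le> \<lfloor>q\<rfloor>" using q2 by (simp add: le_floor_iff)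
  have K2: "real K \<ge> 2" using fl2 unfolding K_def by simp
  define s where "s = real K * (real K - 1) / 2"
  have "real K * (real K - 1) \<ge> 2 * 1" using K2 by (intro mult_mono) auto
  then have s1: "s \<ge> 1" unfolding s_def by simp
  have Kq2: "real K^2 \<le> q^2" using K1 K2 by (intro power_mono) auto
  have q2q4: "q^2 \<le> q^4" using q2 by (intro power_increasing) auto
  have kk: "0 \<le> real K * real K" by simp
  have "s \<le> real K^2" unfolding s_def power2_eq_square right_diff_distrib mult_1_right by (rule aux_half[OF kk]) (use K2 in simp)
  then have sw: "s \<le> w" using Kq2 q2q4 q4 by linarith
  define N where "N = nat \<lfloor>w/s\<rfloor>"
  have wsge: "w/s \<ge> 1" using sw s1 by simp
  have N1: "real N \<le> w/s" "real N > w/s - 1" unfolding N_def using wsge by linarith+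
  have fl1: "1 \<le> \<lfloor>w/s\<rfloor>" using wsge by (simp add: le_floor_iff)
  have Npos: "real N \<ge> 1" using fl1 unfolding N_def by simp
  define l where "l = w / (real N * s)"
  have Ns: "real N * s \<le> w" using N1 s1 by (simp add: field_simps)
  have Ns2: "w \<le> 2 * (real N * s)"
  proof -
    have "w/s < real N + 1" using N1 by linarith
    then have "w < (real N + 1) * s" using s1 by (simp add: field_simps)
    moreover have "1 * s \<le> real N * s" using Npos s1 by (intro mult_right_mono) auto
    ultimately show ?thesis by (simp add: distrib_right)
  qed
  have Nspos: "real N * s > 0" using Npos s1 by simp
  have l1: "l \<ge> 1" unfolding l_def using Ns Nspos by simp
  have l2: "l \<le> 2" unfolding l_def using Ns2 Nspos by (simp add: field_simps)
  have wl: "w = l * real N * (real K * (real K - 1) / 2)"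
  proof -
    have "s \<noteq> 0" "real N \<noteq> 0" using s1 Npos by auto
    then have "l * real N * s = w" unfolding l_def by simp
    then show ?thesis unfolding s_def by simp
  qed
  have h: "h_omega w \<le> l * (real N * real K^2/8 + real K^3/2)"
    by (rule construct[OF l1 wl])
  have split: "l * (real N * real K^2/8 + real K^3/2) = w/4 + l * (real N * real K / 8 + real K^3/2)"
    using wl by (simp add: power2_eq_square power3_eq_cube algebra_simps)
  have NK: "real N * real K \<le> 8 * q^3"
  proof -
    have "real N * real K \<le> (w/s) * real K" using N1 K2 by (intro mult_right_mono) auto
    also have "\<dots> = 2 * w / (real K - 1)" unfolding s_def using K2 by (simp add: field_simps)
    also have "\<dots> \<le> 8 * w / q"
    proof -
      have "real K - 1 \<ge> q/4" using K1 K2 q2 by linarith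
      then have "2 * w / (real K - 1) \<le> 2 * w / (q/4)" using wpos qpos
        by (intro divide_left_mono) auto
      then show ?thesis by (simp add: field_simps)
    qed
    also have "\<dots> = 8 * q^3" using q4 qpos by (simp add: field_simps power_Suc power_numeral_reduce)
    finally show ?thesis .
  qed
  have K3: "real K^3 \<le> q^3" using K1 K2 by (intro power_mono) auto
  have "l * (real N * real K / 8 + real K^3/2) \<le> 2 * (q^3 + q^3/2)"
  proof (rule mult_mono)
    show "real N * real K / 8 + real K^3/2 \<le> q^3 + q^3/2" using NK K3 by linarith
    show "0 \<le> real N * real K / 8 + real K ^ 3 / 2" by simp
  qed (use l2 in auto)
  then have b: "l * (real N * real K / 8 + real K^3/2) \<le> 3 * q^3" by simp
  have a: "h_omega w \<le> w/4 + l * (real N * real K / 8 + real K^3/2)" using h split by simp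
  have gen: "\<And>T H. H \<le> w/4 + T \<Longrightarrow> T \<le> 3 * q^3 \<Longrightarrow> H \<le> w/4 + 3 * q^3" by linarith
  have "h_omega w \<le> w/4 + 3 * q^3" by (rule gen[OF a b])
  show "h_omega w \<le> w / 4 + 4 * w powr (3 / 4)"
  proof -
    have "3 * q^3 \<le> 4 * q^3" using qpos by simp
    then show ?thesis using \<open>h_omega w \<le> w/4 + 3 * q^3\<close> q3 by linarith
  qed
  qed
  show ?thesis
    by (rule exI[of _ "4::real"], simp, rule exI[of _ "16::real"], simp add: main)
qed

end
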